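(* Let $b(\lambda)=\frac14\lambda^4+\frac12p\lambda^2+q\lambda$ with $p<0$, $q\in\mathbb{R}$, let $b^*(\eta)=\sup_{\lambda}[\eta\lambda-b(\lambda)]$, and $A(x,r,\eta)=b(x)+b(r)-\eta(x+r)+2b^*(\eta)$. (1) If $x=\sqrt{-p}$, then for $\eta>q$, $A(x,x,\eta)\approx(\eta-q)^2(1+|\eta|)^{-2/3}$. (2) If $x=-\sqrt{-p}$, then for $\eta<q$, $A(x,x,\eta)\approx(\eta-q)^2(1+|\eta|)^{-2/3}$.
   Context: $X\approx Y$ means $cY\le X\le c^{-1}Y$ for some $c>0$ independent of $\eta$ (it may depend on $p,q$). *)

theory Defs
  imports Complex_Main
begin

definition bfun :: "real \<Rightarrow> real \<Rightarrow> real \<Rightarrow> real" where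
  "bfun p q l = l^4 / 4 + p * l^2 / 2 + q * l"

definition bstar :: "real \<Rightarrow> real \<Rightarrow> real \<Rightarrow> real" where
  "bstar p q \<eta> = (SUP l::real. \<eta> * l - bfun p q l)"

definition Afun :: "real \<Rightarrow> real \<Rightarrow> real \<Rightarrow> real \<Rightarrow> real \<Rightarrow> real" where
  "Afun p q x r \<eta> = bfun p q x + bfun p q r - \<eta> * (x + r) + 2 * bstar p q \<eta>"

end

theory Submission
  imports Defs
begin

definition G :: "real \<Rightarrow> real \<Rightarrow> real \<Rightarrow> real" where
  "G a \<nu> t = \<nu> * (t - a) - (t^2 - a^2)^2 / 4"

lemma G_up:
  fixes a \<nu> W t :: real
  assumes a: "a > 0" and nu: "\<nu> > 0" and W: "W \<ge> 1" and W3: "W^3 = 1 + \<nu>"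
  shows "G a \<nu> t \<le> (2 / a^2 + 4) * \<nu>^2 / W^2"
proof -
  define s where "s = t - a"
  have t: "t = s + a" using s_def by simp
  have Gs: "G a \<nu> t = \<nu> * s - s^2 * (s + 2*a)^2 / 4"
    unfolding G_def t by (simp add: power2_eq_square algebra_simps)
  have W2: "W^2 > 0" using W by simp
  have R0: "0 \<le> (2 / a^2 + 4) * \<nu>^2 / W^2" using W2 a by simp
  show ?thesis
  proof (cases "s \<le> 0")
    case True
    have "\<nu> * s \<le> 0" using True nu by (simp add: mult_nonneg_nonpos)
    moreover have "0 \<le> s^2 * (s + 2*a)^2 / 4" by simp
    ultimately show ?thesis using Gs R0 by linarith
  next
    case False
    hence sp: "s > 0" by simp
    have sq: "(s + 2*a)^2 \<ge> s^2 + 4*a^2" using sp a by (simp add: power2_eq_square algebra_simps)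
    have h: "s^2 * (s + 2*a)^2 / 4 \<ge> a^2 * s^2 + s^4/4"
    proof -
      have "s^2 * (s^2 + 4*a^2) \<le> s^2 * (s + 2*a)^2" using sq by (simp add: mult_left_mono)
      thus ?thesis by (simp add: power2_eq_square power4_eq_xxxx algebra_simps)
    qed
    show ?thesis
    proof (cases "a^2 * s + s^3/4 \<ge> \<nu>")
      case True
      have "\<nu> * s \<le> (a^2 * s + s^3/4) * s" using True sp by (simp add: mult_right_mono)
      also have "\<dots> = a^2 * s^2 + s^4/4" by (simp add: power2_eq_square power3_eq_cube power4_eq_xxxx algebra_simps)
      finally show ?thesis using Gs h R0 by linarith
    next
      case False
      have a2: "a^2 > 0" using a by simp
      have s3: "s^3 \<ge> 0" using sp by simp
      have "a^2 * s < \<nu>" using False s3 by linarith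
      hence s1: "s < \<nu> / a^2" using a2 by (simp add: field_simps)
      have s2: "s^3 < 4 * \<nu>" using False a2 sp
      proof -
        have "a^2 * s > 0" using a2 sp by simp
        thus ?thesis using False by linarith
      qed
      have "s^2 * (s + 2*a)^2 / 4 \<ge> 0" by simp
      hence Gle: "G a \<nu> t \<le> \<nu> * s" using Gs by linarith
      have bound: "s \<le> (2 / a^2 + 4) * \<nu> / W^2"
      proof (cases "\<nu> \<le> 1")
        case True
        have "W^2 \<le> W^3" using W by (simp add: power_increasing)
        hence W22: "W^2 \<le> 2" using W3 True by linarith
        have "s < \<nu> / a^2" by (rule s1)
        also have "\<nu> / a^2 \<le> 2 * \<nu> / (a^2 * W^2)"
          using W22 W2 a2 nu by (simp add: field_simps)
        also have "\<dots> \<le> (2 / a^2 + 4) * \<nu> / W^2"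
          using W2 a2 nu by (simp add: field_simps)
        finally show ?thesis by simp
      next
        case False
        have "s < 2 * W"
        proof (rule ccontr)
          assume "\<not> s < 2 * W"
          hence "2 * W \<le> s" by simp
          hence "(2*W)^3 \<le> s^3" using W by (intro power_mono) auto
          hence "8 * W^3 \<le> s^3" by simp
          thus False using s2 W3 nu by linarith
        qed
        also have "2 * W = 2 * W^3 / W^2" using W2 by (simp add: power2_eq_square power3_eq_cube field_simps)
        also have "\<dots> \<le> 4 * \<nu> / W^2" using W3 False W2 by (simp add: divide_right_mono)
        also have "\<dots> \<le> (2 / a^2 + 4) * \<nu> / W^2" using W2 a2 nu by (simp add: divide_right_mono)
        finally show ?thesis by simp
      qed
      have "\<nu> * s \<le> \<nu> * ((2 / a^2 + 4) * \<nu> / W^2)" using bound nu by (intro mult_left_mono) auto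
      also have "\<dots> = (2 / a^2 + 4) * \<nu>^2 / W^2" by (simp add: power2_eq_square)
      finally show ?thesis using Gle by linarith
    qed
  qed
qed

lemma G_low:
  fixes a \<nu> W :: real
  assumes a: "a > 0" and nu: "\<nu> > 0" and W: "W \<ge> 1" and W3: "\<nu> \<le> W^3"
  defines "D \<equiv> (1 + 2*a)^2 / 2 + 1"
  shows "G a \<nu> (a + \<nu> / (D * W^2)) \<ge> \<nu>^2 / (2 * D * W^2)"
proof -
  have D1: "D \<ge> 1" unfolding D_def by simp
  have DD: "(1 + 2*a)^2 \<le> 2 * D" unfolding D_def by simp
  have W2: "W^2 > 0" using W by simp
  define s where "s = \<nu> / (D * W^2)"
  have sp: "s > 0" unfolding s_def using nu D1 W2 by simp
  have Gs: "G a \<nu> (a + s) = \<nu> * s - s^2 * (s + 2*a)^2 / 4"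
    unfolding G_def by (simp add: power2_eq_square algebra_simps)
  have "s \<le> W / D"
  proof -
    have "\<nu> / W^2 \<le> W^3 / W^2" using W3 W2 by (simp add: divide_right_mono)
    also have "\<dots> = W" using W2 by (simp add: power2_eq_square power3_eq_cube field_simps)
    finally have "\<nu> / W^2 \<le> W" .
    hence "\<nu> / W^2 / D \<le> W / D" by (rule divide_right_mono) (use D1 in auto)
    thus ?thesis unfolding s_def by (simp add: field_simps)
  qed
  also have "W / D \<le> W" using D1 W by (simp add: field_simps)
  finally have sW: "s \<le> W" .
  have "s + 2*a \<le> W + 2*a*W" proof -
    have "2*a*1 \<le> 2*a*W" using W a by (intro mult_left_mono) auto
    thus ?thesis using sW by linarith
  qed
  also have "\<dots> = (1 + 2*a) * W" by (simp add: algebra_simps)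
  finally have s2a: "s + 2*a \<le> (1 + 2*a) * W" .
  have "(s + 2*a)^2 \<le> ((1 + 2*a) * W)^2" using s2a sp a by (intro power_mono) auto
  hence "s^2 * (s + 2*a)^2 \<le> s^2 * ((1 + 2*a)^2 * W^2)" by (simp add: mult_left_mono power_mult_distrib)
  also have "\<dots> \<le> s^2 * (2 * D * W^2)" using DD W2 by (intro mult_left_mono) auto
  also have "s^2 * (2 * D * W^2) = 2 * \<nu>^2 / (D * W^2)"
    unfolding s_def using D1 W2 by (simp add: power2_eq_square field_simps)
  finally have T: "s^2 * (s + 2*a)^2 / 4 \<le> \<nu>^2 / (2 * D * W^2)" by (simp add: field_simps)
  have "\<nu> * s = \<nu>^2 / (D * W^2)" unfolding s_def by (simp add: power2_eq_square)
  also have "\<dots> = 2 * (\<nu>^2 / (2 * D * W^2))" by simp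
  finally have "\<nu> * s = 2 * (\<nu>^2 / (2 * D * W^2))" .
  hence "G a \<nu> (a + s) \<ge> \<nu>^2 / (2 * D * W^2)" using Gs T by linarith
  thus ?thesis unfolding s_def .
qed

lemma sup_bounds:
  fixes f g :: "real \<Rightarrow> real"
  assumes "\<And>l. f l = g l + k" "\<And>l. g l \<le> U" "L \<le> g tz"
  shows "L + k \<le> (SUP l. f l) \<and> (SUP l. f l) \<le> U + k"
proof -
  have fb: "\<And>l. f l \<le> U + k" using assms by (smt (verit))
  hence bdd: "bdd_above (range f)" by (intro bdd_aboveI2) 
  have "f tz \<le> (SUP l. f l)" by (rule cSUP_upper[OF UNIV_I bdd])
  moreover have "(SUP l. f l) \<le> U + k" using fb by (intro cSUP_least) auto
  ultimately show ?thesis using assms(1)[of tz] assms(3) by linarith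
qed

lemma W_facts:
  fixes \<nu> :: real
  assumes "\<nu> > 0"
  shows "(1+\<nu>) powr (1/3) \<ge> 1" "((1+\<nu>) powr (1/3))^3 = 1 + \<nu>"
        "(1+\<nu>) powr (-2/3) = 1 / ((1+\<nu>) powr (1/3))^2"
proof -
  have x: "1 + \<nu> > 0" using assms by simp
  show "(1+\<nu>) powr (1/3) \<ge> 1" using assms by (intro ge_one_powr_ge_zero) auto
  have "((1+\<nu>) powr (1/3))^3 = ((1+\<nu>) powr (1/3)) powr (real 3)"
    using x by (simp add: powr_realpow)
  also have "\<dots> = 1 + \<nu>" using x by (simp add: powr_powr)
  finally show "((1+\<nu>) powr (1/3))^3 = 1 + \<nu>" .
  have Wp: "(1+\<nu>) powr (1/3) > 0" using x by simp
  have "((1+\<nu>) powr (1/3))^2 = ((1+\<nu>) powr (1/3)) powr (real 2)"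
    by (rule sym[OF powr_realpow[OF Wp]])
  also have "\<dots> = (1+\<nu>) powr (1/3 * real 2)" by (rule powr_powr)
  also have "\<dots> = (1+\<nu>) powr (2/3)" by simp
  finally have "((1+\<nu>) powr (1/3))^2 = (1+\<nu>) powr (2/3)" .
  hence e: "1 / ((1+\<nu>) powr (1/3))^2 = inverse ((1+\<nu>) powr (2/3))"
    by (simp only: divide_inverse mult_1)
  have m: "(-2/3::real) = - (2/3)" by simp
  show "(1+\<nu>) powr (-2/3) = 1 / ((1+\<nu>) powr (1/3))^2"
    unfolding e m by (rule powr_minus)
qed

lemma combine:
  fixes a q \<eta> \<nu> S :: real
  assumes a: "a > 0" and nu: "\<nu> > 0" and nuq: "\<nu> = \<bar>\<eta> - q\<bar>"
    and lo: "\<nu>^2 / (2 * ((1 + 2*a)^2 / 2 + 1) * ((1+\<nu>) powr (1/3))^2) \<le> S"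
    and up: "S \<le> (2 / a^2 + 4) * \<nu>^2 / ((1+\<nu>) powr (1/3))^2"
  shows "min ((1+\<bar>q\<bar>) powr (-2/3) / ((1 + 2*a)^2 / 2 + 1)) ((1+\<bar>q\<bar>) powr (-2/3) / (2 * (2 / a^2 + 4)))
          * ((\<eta> - q)^2 * (1 + \<bar>\<eta>\<bar>) powr (-2/3)) \<le> 2 * S
       \<and> 2 * S \<le> inverse (min ((1+\<bar>q\<bar>) powr (-2/3) / ((1 + 2*a)^2 / 2 + 1)) ((1+\<bar>q\<bar>) powr (-2/3) / (2 * (2 / a^2 + 4))))
          * ((\<eta> - q)^2 * (1 + \<bar>\<eta>\<bar>) powr (-2/3))"
proof -
  define D where "D = (1 + 2*a)^2 / 2 + 1"
  define C where "C = 2 / a^2 + 4"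
  define \<kappa> where "\<kappa> = (1+\<bar>q\<bar>) powr (-2/3)"
  define V where "V = (1+\<nu>) powr (-2/3)"
  define P where "P = (1 + \<bar>\<eta>\<bar>) powr (-2/3)"
  define c where "c = min (\<kappa> / D) (\<kappa> / (2 * C))"
  have D1: "D \<ge> 1" unfolding D_def by simp
  have Cp: "C > 0" unfolding C_def proof - have "2 / a^2 > 0" using a by simp thus "0 < 2 / a^2 + 4" by linarith qed
  have kp: "\<kappa> > 0" unfolding \<kappa>_def by simp
  have Vp: "V > 0" unfolding V_def using nu by simp
  have Pp: "P > 0" unfolding P_def by simp
  have cp: "c > 0" unfolding c_def using kp D1 Cp by simp
  have VW: "1 / ((1+\<nu>) powr (1/3))^2 = V" unfolding V_def using W_facts(3)[OF nu] by simp
  have lo': "\<nu>^2 * V / (2 * D) \<le> S"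
  proof -
    have "\<nu>^2 / (2 * D * ((1+\<nu>) powr (1/3))^2) = \<nu>^2 * (1 / ((1+\<nu>) powr (1/3))^2) / (2 * D)" by simp
    thus ?thesis using lo VW unfolding D_def by simp
  qed
  have up': "S \<le> C * \<nu>^2 * V"
  proof -
    have "C * \<nu>^2 / ((1+\<nu>) powr (1/3))^2 = C * \<nu>^2 * (1 / ((1+\<nu>) powr (1/3))^2)" by simp
    thus ?thesis using up VW unfolding C_def by simp
  qed
  have T: "(\<eta> - q)^2 = \<nu>^2" using nuq by simp
  have e1: "1 + \<bar>\<eta>\<bar> \<le> (1+\<bar>q\<bar>) * (1+\<nu>)" using nuq nu by (simp add: algebra_simps) (smt (verit) mult_nonneg_nonneg abs_ge_zero)
  have e2: "1 + \<nu> \<le> (1+\<bar>q\<bar>) * (1+\<bar>\<eta>\<bar>)" using nuq by (simp add: algebra_simps) (smt (verit) mult_nonneg_nonneg abs_ge_zero)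
  have "((1+\<bar>q\<bar>) * (1+\<nu>)) powr (-2/3) \<le> P" unfolding P_def
    using e1 by (intro powr_mono2') auto
  hence PV: "\<kappa> * V \<le> P" unfolding \<kappa>_def V_def using nu by (simp add: powr_mult)
  have "((1+\<bar>q\<bar>) * (1+\<bar>\<eta>\<bar>)) powr (-2/3) \<le> V" unfolding V_def
    using e2 nu by (intro powr_mono2') auto
  hence VP: "\<kappa> * P \<le> V" unfolding \<kappa>_def P_def by (simp add: powr_mult)
  have "c * (\<nu>^2 * P) \<le> (\<kappa> / D) * (\<nu>^2 * P)" unfolding c_def using Pp
    by (intro mult_right_mono) auto
  also have "\<dots> = \<nu>^2 * (\<kappa> * P) / D" by simp
  also have "\<dots> \<le> \<nu>^2 * V / D" using VP D1 by (intro divide_right_mono mult_left_mono) auto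
  also have "\<dots> = 2 * (\<nu>^2 * V / (2 * D))" by simp
  also have "\<dots> \<le> 2 * S" using lo' by linarith
  finally have L: "c * (\<nu>^2 * P) \<le> 2 * S" .
  have ic: "2 * C / \<kappa> \<le> inverse c"
  proof -
    have "c \<le> \<kappa> / (2 * C)" unfolding c_def by (rule min.cobounded2)
    hence "inverse (\<kappa> / (2 * C)) \<le> inverse c" using cp by (intro le_imp_inverse_le) auto
    thus ?thesis by simp
  qed
  have n2: "\<nu>^2 \<ge> 0" by simp
  have s1: "C * V \<le> C * (P / \<kappa>)" using PV kp Cp by (intro mult_left_mono) (simp_all add: field_simps)
  have s2: "C * (P / \<kappa>) = (C / \<kappa>) * P" by simp
  have s3: "2 * (C / \<kappa>) \<le> inverse c" using ic by simp
  have s4: "2 * ((C / \<kappa>) * P) \<le> inverse c * P" proof -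
    have "2 * (C / \<kappa>) * P \<le> inverse c * P" using s3 Pp by (intro mult_right_mono) auto
    thus ?thesis by (simp only: mult.assoc)
  qed
  have "2 * S \<le> \<nu>^2 * (2 * (C * V))" using up' by (simp add: algebra_simps)
  also have "\<dots> \<le> \<nu>^2 * (inverse c * P)"
  proof -
    have "2 * (C * V) \<le> 2 * (C * (P / \<kappa>))" using s1 by simp
    also have "\<dots> = 2 * ((C / \<kappa>) * P)" using s2 by simp
    also have "\<dots> \<le> inverse c * P" by (rule s4)
    finally have "2 * (C * V) \<le> inverse c * P" .
    thus ?thesis using n2 by (rule mult_left_mono)
  qed
  finally have U: "2 * S \<le> inverse c * (\<nu>^2 * P)" by (simp only: mult.left_commute)
  have "c * ((\<eta> - q)^2 * P) \<le> 2 * S \<and> 2 * S \<le> inverse c * ((\<eta> - q)^2 * P)"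
  proof -
    have TT: "(\<eta> - q)^2 * P = \<nu>^2 * P" using T by simp
    show ?thesis unfolding TT using L U by (rule conjI)
  qed
  then show ?thesis by (simp only: c_def D_def C_def \<kappa>_def P_def)
qed

lemma ident1:
  fixes a p q \<eta> l :: real
  assumes "a^2 = -p"
  shows "\<eta> * l - bfun p q l = G a (\<eta> - q) l + (\<eta> * a - bfun p q a)"
proof -
  have p: "p = - (a^2)" using assms by simp
  show ?thesis unfolding bfun_def G_def p by (simp add: field_simps power2_eq_square power4_eq_xxxx)
qed

lemma ident2:
  fixes a p q \<eta> l :: real
  assumes "a^2 = -p"
  shows "\<eta> * l - bfun p q l = G a (q - \<eta>) (-l) + (\<eta> * (-a) - bfun p q (-a))"
proof -
  have p: "p = - (a^2)" using assms by simp
  show ?thesis unfolding bfun_def G_def p by (simp add: field_simps power2_eq_square power4_eq_xxxx)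
qed

theorem proposition6p3:
  fixes p q :: real
  assumes "p < 0"
  shows "(\<exists>c>0. \<forall>\<eta>. \<eta> > q \<longrightarrow>
            c * ((\<eta> - q)^2 * (1 + \<bar>\<eta>\<bar>) powr (-2/3)) \<le> Afun p q (sqrt (-p)) (sqrt (-p)) \<eta> \<and>
            Afun p q (sqrt (-p)) (sqrt (-p)) \<eta> \<le> inverse c * ((\<eta> - q)^2 * (1 + \<bar>\<eta>\<bar>) powr (-2/3)))
       \<and> (\<exists>c>0. \<forall>\<eta>. \<eta> < q \<longrightarrow>
            c * ((\<eta> - q)^2 * (1 + \<bar>\<eta>\<bar>) powr (-2/3)) \<le> Afun p q (- sqrt (-p)) (- sqrt (-p)) \<eta> \<and>
            Afun p q (- sqrt (-p)) (- sqrt (-p)) \<eta> \<le> inverse c * ((\<eta> - q)^2 * (1 + \<bar>\<eta>\<bar>) powr (-2/3)))"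
proof -
  define a where "a = sqrt (-p)"
  have a: "a > 0" unfolding a_def using assms by simp
  have a2: "a^2 = -p" unfolding a_def using assms by simp
  define D where "D = (1 + 2*a)^2 / 2 + 1"
  define C where "C = 2 / a^2 + 4"
  define c where "c = min ((1+\<bar>q\<bar>) powr (-2/3) / ((1 + 2*a)^2 / 2 + 1)) ((1+\<bar>q\<bar>) powr (-2/3) / (2 * (2 / a^2 + 4)))"
  have D1: "D \<ge> 1" unfolding D_def by simp
  have Cp: "2 / a^2 + 4 > 0" proof - have "2 / a^2 > 0" using a by simp thus ?thesis by linarith qed
  have cp: "c > 0"
  proof -
    have "(1+\<bar>q\<bar>) powr (-2/3) > 0" by simp
    moreover have "(1 + 2*a)^2 / 2 + 1 > (0::real)" by (simp add: add_nonneg_pos)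
    ultimately show ?thesis unfolding c_def using Cp by simp
  qed
  have gen: "c * ((\<eta> - q)^2 * (1 + \<bar>\<eta>\<bar>) powr (-2/3)) \<le> Afun p q x x \<eta> \<and>
            Afun p q x x \<eta> \<le> inverse c * ((\<eta> - q)^2 * (1 + \<bar>\<eta>\<bar>) powr (-2/3))"
    if nu: "\<nu> > 0" and nuq: "\<nu> = \<bar>\<eta> - q\<bar>" and h: "h = id \<or> h = uminus"
      and hh: "\<And>l. h (h l) = l"
      and idt: "\<And>l. \<eta> * l - bfun p q l = G a \<nu> (h l) + (\<eta> * x - bfun p q x)"
    for \<eta> \<nu> x and h :: "real \<Rightarrow> real"
  proof -
    define W where "W = (1+\<nu>) powr (1/3)"
    have W1: "W \<ge> 1" and W3: "W^3 = 1 + \<nu>" unfolding W_def using W_facts[OF nu] by auto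
    define k where "k = \<eta> * x - bfun p q x"
    define t0 where "t0 = h (a + \<nu> / (D * W^2))"
    have sb: "\<nu>^2 / (2 * D * W^2) + k \<le> (SUP l. \<eta> * l - bfun p q l) \<and>
              (SUP l. \<eta> * l - bfun p q l) \<le> (2 / a^2 + 4) * \<nu>^2 / W^2 + k"
    proof (rule sup_bounds[where g = "\<lambda>l. G a \<nu> (h l)" and tz = t0])
      show "\<eta> * l - bfun p q l = G a \<nu> (h l) + k" for l unfolding k_def by (rule idt)
      show "G a \<nu> (h l) \<le> (2 / a^2 + 4) * \<nu>^2 / W^2" for l
        using G_up[OF a nu W1 W3] .
      have "\<nu> \<le> W^3" using W3 by simp
      thus "\<nu>^2 / (2 * D * W^2) \<le> G a \<nu> (h t0)"
        unfolding t0_def hh D_def by (rule G_low[OF a nu W1])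
    qed
    have A: "Afun p q x x \<eta> = 2 * ((SUP l. \<eta> * l - bfun p q l) - k)"
      unfolding Afun_def bstar_def k_def by (simp add: algebra_simps)
    define S where "S = (SUP l. \<eta> * l - bfun p q l) - k"
    have lo: "\<nu>^2 / (2 * ((1 + 2*a)^2 / 2 + 1) * ((1+\<nu>) powr (1/3))^2) \<le> S"
      using sb unfolding S_def D_def W_def by linarith
    have up: "S \<le> (2 / a^2 + 4) * \<nu>^2 / ((1+\<nu>) powr (1/3))^2"
      using sb unfolding S_def W_def by linarith
    show ?thesis using combine[OF a nu nuq lo up] unfolding A S_def[symmetric] c_def .
  qed
  have P1: "\<forall>\<eta>. \<eta> > q \<longrightarrow>
            c * ((\<eta> - q)^2 * (1 + \<bar>\<eta>\<bar>) powr (-2/3)) \<le> Afun p q a a \<eta> \<and>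
            Afun p q a a \<eta> \<le> inverse c * ((\<eta> - q)^2 * (1 + \<bar>\<eta>\<bar>) powr (-2/3))"
  proof (intro allI impI)
    fix \<eta> assume e: "\<eta> > q"
    show "c * ((\<eta> - q)^2 * (1 + \<bar>\<eta>\<bar>) powr (-2/3)) \<le> Afun p q a a \<eta> \<and>
            Afun p q a a \<eta> \<le> inverse c * ((\<eta> - q)^2 * (1 + \<bar>\<eta>\<bar>) powr (-2/3))"
    proof -
      have i: "\<And>l. \<eta> * l - bfun p q l = G a (\<eta> - q) (id l) + (\<eta> * a - bfun p q a)"
        unfolding id_apply by (rule ident1[OF a2])
      have n1: "\<eta> - q > 0" using e by simp
      have n2: "\<eta> - q = \<bar>\<eta> - q\<bar>" using e by simp
      have n3: "id = id \<or> id = (uminus :: real \<Rightarrow> real)" by simp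
      have n4: "\<And>l::real. id (id l) = l" by simp
      show ?thesis by (rule gen[OF n1 n2 n3 n4 i])
    qed
  qed
  have P2: "\<forall>\<eta>. \<eta> < q \<longrightarrow>
            c * ((\<eta> - q)^2 * (1 + \<bar>\<eta>\<bar>) powr (-2/3)) \<le> Afun p q (-a) (-a) \<eta> \<and>
            Afun p q (-a) (-a) \<eta> \<le> inverse c * ((\<eta> - q)^2 * (1 + \<bar>\<eta>\<bar>) powr (-2/3))"
  proof (intro allI impI)
    fix \<eta> assume e: "\<eta> < q"
    show "c * ((\<eta> - q)^2 * (1 + \<bar>\<eta>\<bar>) powr (-2/3)) \<le> Afun p q (-a) (-a) \<eta> \<and>
            Afun p q (-a) (-a) \<eta> \<le> inverse c * ((\<eta> - q)^2 * (1 + \<bar>\<eta>\<bar>) powr (-2/3))"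
    proof -
      have i: "\<And>l. \<eta> * l - bfun p q l = G a (q - \<eta>) (uminus l) + (\<eta> * (-a) - bfun p q (-a))"
        by (rule ident2[OF a2])
      have n1: "q - \<eta> > 0" using e by simp
      have n2: "q - \<eta> = \<bar>\<eta> - q\<bar>" using e by simp
      have n3: "uminus = id \<or> uminus = (uminus :: real \<Rightarrow> real)" by simp
      have n4: "\<And>l::real. - (- l) = l" by simp
      show ?thesis by (rule gen[OF n1 n2 n3 n4 i])
    qed
  qed
  show ?thesis using P1 P2 cp unfolding a_def by blast
qed

end
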